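(* Let $A$ be a selfadjoint operator on a separable infinite-dimensional Hilbert space $\mathcal{H}$ which is bounded below, let $a<\inf\sigma(A)$, and let $\mathcal{L}_n\subset\operatorname{D}((A-a)^{1/2})$ be a finite-dimensional subspace. Let $\mathcal{G}_n=(A-a)^{1/2}\mathcal{L}_n$ with orthogonal projection $p_n$. Then for every real $\lambda\neq a$, \[ \lambda\in\sigma(\pi_nA|_{\mathcal{L}_n})\iff(\lambda-a)^{-1}\in\sigma\big(p_n(A-a)^{-1}|_{\mathcal{G}_n}\big). \]
   Context: Here $\pi_nA|_{\mathcal{L}_n}:\mathcal{L}_n\to\mathcal{L}_n$ denotes the compression of $A$ defined via the quadratic form: for $x\in\mathcal{L}_n$ it is the unique element $A_nx\in\mathcal{L}_n$ with $\langle y,A_nx\rangle=\langle(A-a)^{1/2}y,(A-a)^{1/2}x\rangle+a\langle y,x\rangle$ for all $y\in\mathcal{L}_n$. *)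

theory Defs
  imports "HOL-Analysis.Analysis"
begin

text \<open>A complex Hilbert space is encoded as a real Hilbert space (a type of class
  real_inner and complete_space) together with a complex structure J (multiplication
  by the imaginary unit): J is real-linear, J (J x) = - x and J is isometric for the
  real inner product.  The complex inner product (linear in the second argument) and
  complex scalar multiplication are derived from J.\<close>

definition complex_structure :: "('h::real_inner \<Rightarrow> 'h) \<Rightarrow> bool" where
  "complex_structure J \<longleftrightarrow> linear J \<and> (\<forall>x. J (J x) = - x) \<and> (\<forall>x y. inner (J x) (J y) = inner x y)"

definition cscale :: "('h::real_vector \<Rightarrow> 'h) \<Rightarrow> complex \<Rightarrow> 'h \<Rightarrow> 'h" where
  "cscale J c x = Re c *\<^sub>R x + Im c *\<^sub>R J x"

definition cinner :: "('h::real_inner \<Rightarrow> 'h) \<Rightarrow> 'h \<Rightarrow> 'h \<Rightarrow> complex" where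
  "cinner J x y = Complex (inner x y) (- inner x (J y))"

definition csubspace :: "('h::real_vector \<Rightarrow> 'h) \<Rightarrow> 'h set \<Rightarrow> bool" where
  "csubspace J S \<longleftrightarrow> subspace S \<and> (\<forall>x\<in>S. J x \<in> S)"

definition clinear_on :: "('h::real_vector \<Rightarrow> 'h) \<Rightarrow> 'h set \<Rightarrow> ('h \<Rightarrow> 'h) \<Rightarrow> bool" where
  "clinear_on J D A \<longleftrightarrow> csubspace J D \<and>
     (\<forall>x\<in>D. \<forall>y\<in>D. A (x + y) = A x + A y) \<and>
     (\<forall>c x. x \<in> D \<longrightarrow> A (cscale J c x) = cscale J c (A x))"

text \<open>Self-adjointness: densely defined, and the adjoint equals A (same domain and values).\<close>
definition selfadjoint :: "('h::{real_inner,complete_space} \<Rightarrow> 'h) \<Rightarrow> 'h set \<Rightarrow> ('h \<Rightarrow> 'h) \<Rightarrow> bool" where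
  "selfadjoint J D A \<longleftrightarrow> clinear_on J D A \<and> closure D = UNIV \<and>
     {y. \<exists>z. \<forall>x\<in>D. cinner J (A x) y = cinner J x z} = D \<and>
     (\<forall>x\<in>D. \<forall>y\<in>D. cinner J (A x) y = cinner J x (A y))"

definition bounded_below_op :: "('h::real_inner \<Rightarrow> 'h) \<Rightarrow> 'h set \<Rightarrow> ('h \<Rightarrow> 'h) \<Rightarrow> bool" where
  "bounded_below_op J D A \<longleftrightarrow> (\<exists>c. \<forall>x\<in>D. c * (norm x)\<^sup>2 \<le> Re (cinner J x (A x)))"

definition positive_op :: "('h::real_inner \<Rightarrow> 'h) \<Rightarrow> 'h set \<Rightarrow> ('h \<Rightarrow> 'h) \<Rightarrow> bool" where
  "positive_op J D A \<longleftrightarrow> (\<forall>x\<in>D. 0 \<le> Re (cinner J x (A x)))"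

text \<open>Spectrum of an operator B with domain D, viewed as an operator into the space V:
  lambda is in the resolvent set iff B - lambda is a bijection D \<rightarrow> V with bounded inverse.\<close>
definition spec_on :: "('h::real_normed_vector \<Rightarrow> 'h) \<Rightarrow> 'h set \<Rightarrow> 'h set \<Rightarrow> ('h \<Rightarrow> 'h) \<Rightarrow> complex set" where
  "spec_on J D V B = {mu. \<not> (bij_betw (\<lambda>x. B x - cscale J mu x) D V \<and>
       (\<exists>K. \<forall>x\<in>D. norm x \<le> K * norm (B x - cscale J mu x)))}"

text \<open>(DT, T) is the positive self-adjoint square root of the operator B with domain D
  (i.e. T is positive self-adjoint and T^2 = B as unbounded operators, including domains).\<close>
definition is_pos_sqrt :: "('h::{real_inner,complete_space} \<Rightarrow> 'h) \<Rightarrow> 'h set \<Rightarrow> ('h \<Rightarrow> 'h) \<Rightarrow> 'h set \<Rightarrow> ('h \<Rightarrow> 'h) \<Rightarrow> bool" where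
  "is_pos_sqrt J D B DT T \<longleftrightarrow> selfadjoint J DT T \<and> positive_op J DT T \<and>
     {x\<in>DT. T x \<in> DT} = D \<and> (\<forall>x\<in>D. T (T x) = B x)"

definition shifted_inverse :: "'h set \<Rightarrow> ('h::real_vector \<Rightarrow> 'h) \<Rightarrow> real \<Rightarrow> 'h \<Rightarrow> 'h" where
  "shifted_inverse D A a y = (THE x. x \<in> D \<and> A x - a *\<^sub>R x = y)"

definition orth_proj :: "('h::real_inner \<Rightarrow> 'h) \<Rightarrow> 'h set \<Rightarrow> 'h \<Rightarrow> 'h" where
  "orth_proj J G x = (THE g. g \<in> G \<and> (\<forall>h\<in>G. cinner J h (x - g) = 0))"

text \<open>The compression pi_n A|_L of A to L, defined through the quadratic form of A,
  where T = (A - a)^(1/2).\<close>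
definition form_compression :: "('h::real_inner \<Rightarrow> 'h) \<Rightarrow> ('h \<Rightarrow> 'h) \<Rightarrow> real \<Rightarrow> 'h set \<Rightarrow> 'h \<Rightarrow> 'h" where
  "form_compression J T a L x = (THE z. z \<in> L \<and>
      (\<forall>y\<in>L. cinner J y z = cinner J (T y) (T x) + complex_of_real a * cinner J y x))"

end

theory Submission
  imports Defs
begin

context
  fixes J :: "'h::real_inner \<Rightarrow> 'h"
  assumes cs: "complex_structure J"
begin

lemma J_linear: "linear J" using cs by (simp add: complex_structure_def)
lemma J_J[simp]: "J (J x) = - x" using cs by (simp add: complex_structure_def)
lemma J_inner[simp]: "inner (J x) (J y) = inner x y" using cs by (simp add: complex_structure_def)
lemma J_add[simp]: "J (x + y) = J x + J y" using J_linear by (simp add: linear_add)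
lemma J_diff[simp]: "J (x - y) = J x - J y" using J_linear by (simp add: linear_diff)
lemma J_neg[simp]: "J (- x) = - J x" using J_linear by (simp add: linear_neg)
lemma J_scale[simp]: "J (r *\<^sub>R x) = r *\<^sub>R J x" using J_linear by (simp add: linear_scale)
lemma J_zero[simp]: "J 0 = 0" using J_linear by (simp add: linear_0)
lemma J_sum: "J (sum f S) = (\<Sum>i\<in>S. J (f i))" using J_linear by (simp add: linear_sum)

lemma J_skew: "inner (J x) y = - inner x (J y)"
proof -
  have "inner (J x) y = inner (J (J x)) (J y)" by (rule J_inner[symmetric])
  also have "\<dots> = - inner x (J y)" by (simp only: J_J inner_minus_left)
  finally show ?thesis .
qed

lemma J_self[simp]: "inner x (J x) = 0"
  using J_skew[of x x] by (simp add: inner_commute)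

lemma J_norm[simp]: "norm (J x) = norm x"
  by (simp add: norm_eq_sqrt_inner)

lemma cinner_eq_iff: "cinner J x y = cinner J u v \<longleftrightarrow> inner x y = inner u v \<and> inner x (J y) = inner u (J v)"
  by (simp add: cinner_def complex_eq_iff)

lemma cinner_zero_iff: "cinner J x y = 0 \<longleftrightarrow> inner x y = 0 \<and> inner x (J y) = 0"
  by (simp add: cinner_def complex_eq_iff)

lemma Re_cinner[simp]: "Re (cinner J x y) = inner x y" by (simp add: cinner_def)
lemma Im_cinner[simp]: "Im (cinner J x y) = - inner x (J y)" by (simp add: cinner_def)

lemma cscale_real[simp]: "cscale J (complex_of_real r) x = r *\<^sub>R x"
  by (simp add: cscale_def)
lemma cscale_ii: "cscale J \<i> x = J x" by (simp add: cscale_def)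

lemma cinner_cscale_right: "cinner J x (cscale J c y) = c * cinner J x y"
  by (simp add: cinner_def cscale_def complex_eq_iff inner_add_right inner_diff_right algebra_simps)

lemma cinner_cscale_left: "cinner J (cscale J c x) y = cnj c * cinner J x y"
  by (simp add: cinner_def cscale_def complex_eq_iff inner_add_left J_skew algebra_simps)

lemma cinner_add_right: "cinner J x (y + z) = cinner J x y + cinner J x z"
  by (simp add: cinner_def complex_eq_iff inner_add_right)
lemma cinner_diff_right: "cinner J x (y - z) = cinner J x y - cinner J x z"
  by (simp add: cinner_def complex_eq_iff inner_diff_right)
lemma cinner_add_left: "cinner J (x + y) z = cinner J x z + cinner J y z"
  by (simp add: cinner_def complex_eq_iff inner_add_left)
lemma cinner_diff_left: "cinner J (x - y) z = cinner J x z - cinner J y z"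
  by (simp add: cinner_def complex_eq_iff inner_diff_left)
lemma cinner_scaleR_right: "cinner J x (r *\<^sub>R y) = complex_of_real r * cinner J x y"
  by (simp add: cinner_def complex_eq_iff)
lemma cinner_zero_right[simp]: "cinner J x 0 = 0" by (simp add: cinner_def complex_eq_iff)
lemma cinner_zero_left[simp]: "cinner J 0 x = 0" by (simp add: cinner_def complex_eq_iff)

lemma cscale_add: "cscale J c (x + y) = cscale J c x + cscale J c y"
  by (simp add: cscale_def algebra_simps)
lemma cscale_diff: "cscale J c (x - y) = cscale J c x - cscale J c y"
  by (simp add: cscale_def algebra_simps)

lemma csubspace_J: "csubspace J S \<Longrightarrow> x \<in> S \<Longrightarrow> J x \<in> S"
  by (simp add: csubspace_def)
lemma csubspace_subspace: "csubspace J S \<Longrightarrow> subspace S"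
  by (simp add: csubspace_def)
lemma csubspace_cscale: "csubspace J S \<Longrightarrow> x \<in> S \<Longrightarrow> cscale J c x \<in> S"
  unfolding cscale_def csubspace_def by (simp add: subspace_add subspace_scale)

end

lemma var_zero:
  fixes p q :: real
  assumes h: "\<And>t. 0 \<le> t * t * q - 2 * t * p" and q0: "0 \<le> q"
  shows "p = 0"
proof (cases "q = 0")
  case True
  have "0 \<le> p * p * q - 2 * p * p" using h[of p] by simp
  hence "p * p \<le> 0" using True by simp
  moreover have "0 \<le> p * p" by (rule zero_le_square)
  ultimately have "p * p = 0" by (rule antisym)
  thus ?thesis by simp
next
  case False
  have e: "(p/q)*(p/q)*q = (p/q)*p" using False by (simp add: mult.assoc)
  have "0 \<le> (p/q)*(p/q)*q - 2*(p/q)*p" using h[of "p/q"] .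
  hence "0 \<le> - ((p/q)*p)" using e by simp
  moreover have "(p/q)*p = (p*p)/q" by simp
  moreover have "0 \<le> (p*p)/q" using q0 by simp
  ultimately have "(p*p)/q = 0" by linarith
  thus ?thesis using False by simp
qed

lemma pl: fixes p q :: "'a::real_inner"
  shows "(norm (p + q))\<^sup>2 + (norm (p - q))\<^sup>2 = 2*(norm p)\<^sup>2 + 2*(norm q)\<^sup>2"
  by (simp add: power2_norm_eq_inner inner_add_left inner_add_right inner_diff_left inner_diff_right inner_commute[of q p])
lemma e2: fixes u v y :: "'a::real_inner"
  shows "2 *\<^sub>R (y - (1/2) *\<^sub>R (u+v)) = (y - u) + (y - v)"
  by (simp add: scaleR_right_diff_distrib scaleR_2 algebra_simps)
lemma parallelo:
  fixes u v y :: "'a::real_inner"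
  shows "(norm (u - v))\<^sup>2 = 2*(norm (y-u))\<^sup>2 + 2*(norm(y-v))\<^sup>2 - 4*(norm (y - (1/2) *\<^sub>R (u+v)))\<^sup>2"
proof -
  have a: "(norm (u - v))\<^sup>2 = (norm ((y - u) - (y - v)))\<^sup>2" by (simp add: norm_minus_commute)
  have b: "4*(norm (y - (1/2) *\<^sub>R (u+v)))\<^sup>2 = (norm ((y - u) + (y - v)))\<^sup>2"
  proof -
    have "(norm ((y - u) + (y - v)))\<^sup>2 = (norm (2 *\<^sub>R (y - (1/2) *\<^sub>R (u+v))))\<^sup>2" by (simp only: e2)
    also have "\<dots> = 4*(norm (y - (1/2) *\<^sub>R (u+v)))\<^sup>2" by (simp add: power_mult_distrib)
    finally show ?thesis by simp
  qed
  show ?thesis using pl[of "y - u" "y - v"] a b by linarith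
qed
lemma expand: fixes w s :: "'a::real_inner"
  shows "(norm (w - t *\<^sub>R s))\<^sup>2 = (norm w)\<^sup>2 - 2*t*inner s w + t*t*inner s s"
  by (simp add: power2_norm_eq_inner inner_diff_left inner_diff_right inner_commute[of w s]) (simp add: algebra_simps)

lemma hilbert_proj:
  fixes R :: "'h::{real_inner,complete_space} set"
  assumes sub: "subspace R" and cl: "closed R"
  shows "\<exists>r\<in>R. \<forall>s\<in>R. inner s (y - r) = 0"
proof -
  define d where "d = infdist y R"
  have d0: "0 \<le> d" by (simp add: d_def infdist_nonneg)
  have R0: "0 \<in> R" using sub by (simp add: subspace_0)
  have dle: "d \<le> dist y r" if "r \<in> R" for r using that by (simp add: d_def infdist_le)
  have ex: "\<exists>r\<in>R. dist y r < d + e" if "e > 0" for e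
  proof (rule ccontr)
    assume "\<not> ?thesis"
    hence "\<forall>r\<in>R. d + e \<le> dist y r" by auto
    moreover have "R \<noteq> {}" using R0 by blast
    ultimately have "d + e \<le> (INF a\<in>R. dist y a)" by (intro cINF_greatest) auto
    hence "d + e \<le> infdist y R" using \<open>R \<noteq> {}\<close> by (simp add: infdist_notempty)
    thus False using that by (simp add: d_def)
  qed
  define eps :: "nat \<Rightarrow> real" where "eps n = 1 / real (Suc n)" for n
  have eps0: "eps n > 0" for n by (simp add: eps_def)
  have epsle: "eps n \<le> eps N" if "N \<le> n" for n N
    unfolding eps_def by (rule divide_left_mono) (use that in auto)
  have "\<forall>n. \<exists>r. r \<in> R \<and> dist y r < d + eps n" using ex eps0 by blast
  then obtain r where rR: "\<And>n. r n \<in> R" and rd: "\<And>n. dist y (r n) < d + eps n" by metis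
  have mid: "(1/2) *\<^sub>R (r m + r n) \<in> R" for m n
    using sub rR by (simp add: subspace_add subspace_scale)
  have e1: "eps k \<le> 1" for k by (simp add: eps_def)
  have bound: "(dist (r m) (r n))\<^sup>2 \<le> 4 * eps N * (2*d + 1)" if mN: "N \<le> m" and nN: "N \<le> n" for m n N
  proof -
    have "(dist (r m) (r n))\<^sup>2 = 2*(norm (y - r m))\<^sup>2 + 2*(norm(y- r n))\<^sup>2 - 4*(norm (y - (1/2) *\<^sub>R (r m + r n)))\<^sup>2"
      unfolding dist_norm by (rule parallelo)
    moreover have "(norm (y - r m))\<^sup>2 \<le> (d + eps m)\<^sup>2"
      using power_mono[of "norm (y - r m)" "d + eps m" 2] rd[of m] by (simp add: dist_norm)
    moreover have "(norm (y - r n))\<^sup>2 \<le> (d + eps n)\<^sup>2"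
      using power_mono[of "norm (y - r n)" "d + eps n" 2] rd[of n] by (simp add: dist_norm)
    moreover have "d\<^sup>2 \<le> (norm (y - (1/2) *\<^sub>R (r m + r n)))\<^sup>2"
      using power_mono[of d "norm (y - (1/2) *\<^sub>R (r m + r n))" 2] dle[OF mid[of m n]] d0
      by (simp add: dist_norm)
    moreover have sq: "(d + eps m)\<^sup>2 - d\<^sup>2 = eps m * (2*d + eps m)" for m
      by (simp add: power2_eq_square algebra_simps)
    moreover have mm: "eps m * (2*d + eps m) \<le> eps N * (2*d + 1)" if "N \<le> m" for m
    proof (rule mult_mono)
      show "eps m \<le> eps N" using epsle[OF that] .
      show "2*d + eps m \<le> 2*d + 1" using e1[of m] by simp
      show "0 \<le> eps N" using eps0[of N] by simp
      show "0 \<le> 2*d + eps m" using eps0[of m] d0 by simp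
    qed
    ultimately show ?thesis using sq[of m] sq[of n] mm[OF mN] mm[OF nN] by linarith
  qed
  have "Cauchy r"
  proof (rule metric_CauchyI)
    fix e :: real assume e: "e > 0"
    have "0 < e*e / (4 * (2*d+1))" using e d0 by simp
    then obtain N where N: "inverse (real (Suc N)) < e*e / (4 * (2*d+1))"
      using reals_Archimedean by blast
    have "4 * eps N * (2*d+1) < e * e"
    proof -
      have pos: "0 < 4 * (2*d+1)" using d0 by simp
      have "eps N < e*e / (4 * (2*d+1))" using N by (simp add: eps_def inverse_eq_divide)
      hence "eps N * (4 * (2*d+1)) < e * e" using pos by (simp add: pos_less_divide_eq)
      thus ?thesis by (simp add: algebra_simps)
    qed
    show "\<exists>M. \<forall>m\<ge>M. \<forall>n\<ge>M. dist (r m) (r n) < e"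
    proof (intro exI allI impI)
      fix m n assume "N \<le> m" "N \<le> n"
      hence "(dist (r m) (r n))\<^sup>2 < e\<^sup>2"
        using bound[of N m n] \<open>4 * eps N * (2*d+1) < e * e\<close> by (simp add: power2_eq_square)
      thus "dist (r m) (r n) < e" by (rule power_less_imp_less_base) (use e in simp)
    qed
  qed
  then obtain r0 where lim: "r \<longlonglongrightarrow> r0" using Cauchy_convergent_iff convergent_def by blast
  have r0R: "r0 \<in> R" using closed_sequentially[OF cl] rR lim by blast
  have epslim: "eps \<longlonglongrightarrow> 0" unfolding eps_def using LIMSEQ_inverse_real_of_nat
    by (simp add: inverse_eq_divide)
  have "dist y r0 \<le> d"
  proof (rule LIMSEQ_le)
    show "(\<lambda>n. dist y (r n)) \<longlonglongrightarrow> dist y r0" by (intro tendsto_intros lim)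
    show "(\<lambda>n. d + eps n) \<longlonglongrightarrow> d" using tendsto_add[OF tendsto_const epslim] by simp
    show "\<exists>N. \<forall>n\<ge>N. dist y (r n) \<le> d + eps n" using rd less_imp_le by blast
  qed
  have "inner s (y - r0) = 0" if sR: "s \<in> R" for s
  proof (rule var_zero)
    show "0 \<le> inner s s" by simp
    fix t :: real
    have "r0 + t *\<^sub>R s \<in> R" using sub r0R sR by (simp add: subspace_add subspace_scale)
    hence "dist y r0 \<le> dist y (r0 + t *\<^sub>R s)" using dle \<open>dist y r0 \<le> d\<close> by fastforce
    moreover have "y - (r0 + t *\<^sub>R s) = (y - r0) - t *\<^sub>R s" by (simp add: algebra_simps)
    ultimately have "norm (y - r0) \<le> norm ((y - r0) - t *\<^sub>R s)" by (simp add: dist_norm)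
    hence "(norm (y - r0))\<^sup>2 \<le> (norm ((y - r0) - t *\<^sub>R s))\<^sup>2"
      by (rule power_mono) simp
    thus "0 \<le> t * t * inner s s - 2 * t * inner s (y - r0)"
      by (simp add: expand)
  qed
  thus ?thesis using r0R by blast
qed


lemma J_bounded_linear:
  fixes J :: "'h::real_inner \<Rightarrow> 'h"
  assumes cs: "complex_structure J" shows "bounded_linear J"
  by (rule bounded_linear_intro[of J 1]) (simp_all add: cs)

context
  fixes J :: "'h::{real_inner,complete_space} \<Rightarrow> 'h" and D A
  assumes cs: "complex_structure J" and sa: "selfadjoint J D A"
begin

lemma D_csub: "csubspace J D" using sa by (simp add: selfadjoint_def clinear_on_def)
lemma D_sub: "subspace D" using D_csub csubspace_subspace[OF cs] by blast
lemma A_add: "x \<in> D \<Longrightarrow> y \<in> D \<Longrightarrow> A (x + y) = A x + A y"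
  using sa by (simp add: selfadjoint_def clinear_on_def)
lemma A_cscale: "x \<in> D \<Longrightarrow> A (cscale J c x) = cscale J c (A x)"
  using sa by (simp add: selfadjoint_def clinear_on_def)
lemma A_scaleR: "x \<in> D \<Longrightarrow> A (r *\<^sub>R x) = r *\<^sub>R A x"
  using A_cscale[of x "complex_of_real r"] cs by simp
lemma A_J: "x \<in> D \<Longrightarrow> A (J x) = J (A x)"
  using A_cscale[of x \<i>] cscale_ii[OF cs] by simp
lemma A_diff: "x \<in> D \<Longrightarrow> y \<in> D \<Longrightarrow> A (x - y) = A x - A y"
proof -
  assume xy: "x \<in> D" "y \<in> D"
  hence "x - y \<in> D" using D_sub by (simp add: subspace_diff)
  hence "A (x - y) + A y = A x" using A_add[of "x - y" y] xy by simp
  thus ?thesis by (simp add: algebra_simps)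
qed
lemma D_dense: "closure D = UNIV" using sa by (simp add: selfadjoint_def)
lemma A_sym: "x \<in> D \<Longrightarrow> y \<in> D \<Longrightarrow> cinner J (A x) y = cinner J x (A y)"
  using sa by (simp add: selfadjoint_def)
lemma A_dom: "(\<And>w. w \<in> D \<Longrightarrow> cinner J (A w) y = cinner J w z) \<Longrightarrow> y \<in> D"
proof -
  assume h: "\<And>w. w \<in> D \<Longrightarrow> cinner J (A w) y = cinner J w z"
  have eq: "{y. \<exists>z. \<forall>x\<in>D. cinner J (A x) y = cinner J x z} = D" using sa by (simp add: selfadjoint_def)
  have "y \<in> {y. \<exists>z. \<forall>x\<in>D. cinner J (A x) y = cinner J x z}" using h by blast
  thus ?thesis by (simp only: eq)
qed

lemma dense_orth: "(\<And>w. w \<in> D \<Longrightarrow> inner w z = 0) \<Longrightarrow> z = 0"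
proof -
  assume h: "\<And>w. w \<in> D \<Longrightarrow> inner w z = 0"
  have cl: "closed {w. inner w z = 0}"
    by (intro closed_Collect_eq continuous_intros)
  have "D \<subseteq> {w. inner w z = 0}" using h by blast
  hence "closure D \<subseteq> {w. inner w z = 0}" using cl by (rule closure_minimal)
  hence "inner z z = 0" using D_dense by blast
  thus ?thesis by simp
qed

lemma resolvent_ok:
  fixes mu :: complex and c :: real
  assumes lb: "\<And>x. x \<in> D \<Longrightarrow> c * (norm x)\<^sup>2 \<le> Re (cinner J x (A x))"
    and mu: "Re mu \<le> c - 1"
  shows "mu \<notin> spec_on J D UNIV A"
proof -
  define B where "B x = A x - cscale J mu x" for x
  have Bdiff: "B (x - y) = B x - B y" if "x \<in> D" "y \<in> D" for x y
    using that by (simp add: B_def A_diff cscale_diff[OF cs])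
  have Badd: "B (x + y) = B x + B y" if "x \<in> D" "y \<in> D" for x y
    using that by (simp add: B_def A_add cscale_add[OF cs])
  have BJ: "B (J x) = J (B x)" if "x \<in> D" for x
    using that cs by (simp add: B_def A_J cscale_def algebra_simps)
  have Bscale: "B (r *\<^sub>R x) = r *\<^sub>R B x" if "x \<in> D" for x r
    using that cs by (simp add: B_def A_scaleR cscale_def algebra_simps)
  have inner_cs: "inner x (cscale J mu x) = Re mu * (norm x)\<^sup>2" for x
    using cs by (simp add: cscale_def inner_add_right power2_norm_eq_inner)
  have coer: "(norm x)\<^sup>2 \<le> inner x (B x)" if x: "x \<in> D" for x
  proof -
    have "inner x (B x) = Re (cinner J x (A x)) - Re mu * (norm x)\<^sup>2"
      using cs by (simp add: B_def inner_diff_right inner_cs)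
    moreover have "c * (norm x)\<^sup>2 \<le> Re (cinner J x (A x))" using lb[OF x] .
    moreover have "(norm x)\<^sup>2 \<le> (c - Re mu) * (norm x)\<^sup>2"
      using mult_right_mono[of 1 "c - Re mu" "(norm x)\<^sup>2"] mu by simp
    ultimately show ?thesis by (simp add: algebra_simps)
  qed
  have normle: "norm x \<le> norm (B x)" if x: "x \<in> D" for x
  proof (cases "x = 0")
    case True thus ?thesis by simp
  next
    case False
    have "(norm x)\<^sup>2 \<le> norm x * norm (B x)"
      using coer[OF x] Cauchy_Schwarz_ineq2[of x "B x"] by linarith
    thus ?thesis using False by (simp add: power2_eq_square)
  qed
  have injB: "inj_on B D"
  proof (rule inj_onI)
    fix x y assume "x \<in> D" "y \<in> D" "B x = B y"
    hence "norm (x - y) \<le> 0" using normle[of "x - y"] Bdiff D_sub by (simp add: subspace_diff)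
    thus "x = y" by simp
  qed
  define R where "R = B ` D"
  have subR: "subspace R"
    unfolding R_def subspace_def
  proof (intro conjI ballI allI)
    show "0 \<in> B ` D"
    proof
      show "0 \<in> D" using D_sub by (simp add: subspace_0)
      show "0 = B 0" using Bscale[of 0 0] D_sub by (simp add: subspace_0)
    qed
    fix x y assume "x \<in> B ` D" "y \<in> B ` D"
    then obtain u v where "u \<in> D" "v \<in> D" "x = B u" "y = B v" by blast
    thus "x + y \<in> B ` D" using Badd D_sub by (metis image_eqI subspace_add)
  next
    fix r x assume "x \<in> B ` D"
    then obtain u where "u \<in> D" "x = B u" by blast
    thus "r *\<^sub>R x \<in> B ` D" using Bscale D_sub by (metis image_eqI subspace_scale)
  qed
  have Jbl: "bounded_linear J" using J_bounded_linear[OF cs] .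
  have clR: "closed R"
    unfolding closed_sequential_limits
  proof (intro allI impI, elim conjE)
    fix s l assume sR: "\<forall>n. s n \<in> R" and sl: "s \<longlonglongrightarrow> l"
    have "\<forall>n. \<exists>u. u \<in> D \<and> s n = B u" using sR by (auto simp: R_def)
    then obtain u where uD: "\<And>n. u n \<in> D" and su: "\<And>n. s n = B (u n)" by metis
    have "Cauchy s" using sl by (rule LIMSEQ_imp_Cauchy)
    have "Cauchy u"
    proof (rule metric_CauchyI)
      fix e :: real assume "e > 0"
      then obtain M where M: "\<forall>m\<ge>M. \<forall>n\<ge>M. dist (s m) (s n) < e"
        using \<open>Cauchy s\<close> metric_CauchyD by blast
      show "\<exists>M. \<forall>m\<ge>M. \<forall>n\<ge>M. dist (u m) (u n) < e"
      proof (intro exI allI impI)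
        fix m n assume "M \<le> m" "M \<le> n"
        hence "dist (s m) (s n) < e" using M by blast
        moreover have "dist (u m) (u n) \<le> dist (s m) (s n)"
          using normle[of "u m - u n"] uD D_sub Bdiff by (simp add: dist_norm su subspace_diff)
        ultimately show "dist (u m) (u n) < e" by linarith
      qed
    qed
    then obtain u0 where uu: "u \<longlonglongrightarrow> u0" using Cauchy_convergent_iff convergent_def by blast
    define v where "v = l + cscale J mu u0"
    have Au: "(\<lambda>n. A (u n)) \<longlonglongrightarrow> v"
    proof -
      have "(\<lambda>n. s n + (Re mu *\<^sub>R u n + Im mu *\<^sub>R J (u n))) \<longlonglongrightarrow> l + (Re mu *\<^sub>R u0 + Im mu *\<^sub>R J u0)"
        by (intro tendsto_intros sl uu bounded_linear.tendsto[OF Jbl])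
      moreover have "s n + (Re mu *\<^sub>R u n + Im mu *\<^sub>R J (u n)) = A (u n)" for n
        by (simp add: su B_def cscale_def)
      ultimately show ?thesis by (simp add: v_def cscale_def)
    qed
    have key: "cinner J (A w) u0 = cinner J w v" if wD: "w \<in> D" for w
    proof -
      have e1: "inner (A w) (u n) = inner w (A (u n))" for n
        using A_sym[OF wD uD[of n]] cinner_eq_iff[OF cs] by blast
      have e2: "inner (A w) (J (u n)) = inner w (J (A (u n)))" for n
        using A_sym[OF wD uD[of n]] cinner_eq_iff[OF cs] by blast
      have l1: "(\<lambda>n. inner (A w) (u n)) \<longlonglongrightarrow> inner (A w) u0" by (intro tendsto_intros uu)
      have l2: "(\<lambda>n. inner (A w) (u n)) \<longlonglongrightarrow> inner w v" unfolding e1 by (intro tendsto_intros Au)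
      have l3: "(\<lambda>n. inner (A w) (J (u n))) \<longlonglongrightarrow> inner (A w) (J u0)"
        by (intro tendsto_intros uu bounded_linear.tendsto[OF Jbl])
      have l4: "(\<lambda>n. inner (A w) (J (u n))) \<longlonglongrightarrow> inner w (J v)"
        unfolding e2 by (intro tendsto_intros Au bounded_linear.tendsto[OF Jbl])
      show ?thesis using LIMSEQ_unique[OF l1 l2] LIMSEQ_unique[OF l3 l4] cinner_eq_iff[OF cs] by blast
    qed
    have u0D: "u0 \<in> D" using A_dom key by blast
    have "A u0 - v = 0"
    proof (rule dense_orth)
      fix w assume wD: "w \<in> D"
      have "inner (A w) u0 = inner w (A u0)" using A_sym[OF wD u0D] cinner_eq_iff[OF cs] by blast
      moreover have "inner (A w) u0 = inner w v" using key[OF wD] cinner_eq_iff[OF cs] by blast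
      ultimately show "inner w (A u0 - v) = 0" by (simp add: inner_diff_right)
    qed
    hence "l = B u0" by (simp add: B_def v_def)
    thus "l \<in> R" using u0D by (simp add: R_def)
  qed
  have orthR: "y = 0" if yo: "\<And>s. s \<in> R \<Longrightarrow> inner s y = 0" for y
  proof -
    have Bo: "cinner J (B x) y = 0" if xD: "x \<in> D" for x
    proof -
      have "inner (B x) y = 0" using yo xD by (simp add: R_def)
      moreover have "inner (B (J x)) y = 0" using yo xD csubspace_J[OF cs D_csub] by (simp add: R_def)
      hence "inner (B x) (J y) = 0" using BJ[OF xD] J_skew[OF cs] by simp
      ultimately show ?thesis using cinner_zero_iff[OF cs] by blast
    qed
    have "cinner J (A x) y = cinner J x (cscale J (cnj mu) y)" if xD: "x \<in> D" for x
    proof -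
      have "A x = B x + cscale J mu x" by (simp add: B_def)
      hence "cinner J (A x) y = cinner J (B x) y + cinner J (cscale J mu x) y"
        by (simp add: cinner_add_left[OF cs])
      also have "\<dots> = cnj mu * cinner J x y" using Bo[OF xD] by (simp add: cinner_cscale_left[OF cs])
      also have "\<dots> = cinner J x (cscale J (cnj mu) y)" by (simp add: cinner_cscale_right[OF cs])
      finally show ?thesis .
    qed
    hence yD: "y \<in> D" using A_dom by blast
    have "inner (B y) y = 0" using yo yD by (simp add: R_def)
    hence "(norm y)\<^sup>2 \<le> 0" using coer[OF yD] by (simp add: inner_commute)
    thus ?thesis by simp
  qed
  have surj: "B ` D = UNIV"
  proof -
    have "y \<in> R" for y
    proof -
      obtain r where rR: "r \<in> R" and ro: "\<forall>s\<in>R. inner s (y - r) = 0"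
        using hilbert_proj[OF subR clR, of y] by blast
      have "y - r = 0" using orthR ro by blast
      thus ?thesis using rR by simp
    qed
    thus ?thesis by (auto simp: R_def)
  qed
  have "bij_betw B D UNIV" using injB surj by (simp add: bij_betw_def)
  moreover have "\<forall>x\<in>D. norm x \<le> 1 * norm (B x)" using normle by simp
  ultimately show ?thesis unfolding spec_on_def B_def by blast
qed

lemma a_resolvent:
  assumes bb: "bounded_below_op J D A"
    and a_lt: "a < Inf (Re ` spec_on J D UNIV A)"
  shows "complex_of_real a \<notin> spec_on J D UNIV A"
proof
  assume ain: "complex_of_real a \<in> spec_on J D UNIV A"
  obtain c where lb: "\<And>x. x \<in> D \<Longrightarrow> c * (norm x)\<^sup>2 \<le> Re (cinner J x (A x))"
    using bb by (auto simp: bounded_below_op_def)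
  have "bdd_below (Re ` spec_on J D UNIV A)"
  proof (rule bdd_belowI)
    fix t assume "t \<in> Re ` spec_on J D UNIV A"
    then obtain mu where "mu \<in> spec_on J D UNIV A" "t = Re mu" by blast
    thus "c - 1 \<le> t" using resolvent_ok[OF lb, of mu] by force
  qed
  hence "Inf (Re ` spec_on J D UNIV A) \<le> a"
    using ain by (metis cInf_lower complex_of_real_def image_eqI complex.sel(1))
  thus False using a_lt by simp
qed

end

lemma GS_step:
  fixes S :: "'a::real_inner set"
  assumes fin: "finite S" and S: "pairwise orthogonal S" and x: "x \<in> span S"
    shows "orthogonal x (a - (\<Sum>b\<in>S. (b \<bullet> a / (b \<bullet> b)) *\<^sub>R b))"
proof -
  have "orthogonal (a - (\<Sum>b\<in>S. (b \<bullet> a / (b \<bullet> b)) *\<^sub>R b)) x"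
       if "x \<in> S" for x
  proof -
    have "a \<bullet> x = (\<Sum>y\<in>S. if y = x then y \<bullet> a else 0)"
      by (simp add: fin inner_commute that)
    also have "\<dots> =  (\<Sum>b\<in>S. b \<bullet> a * (b \<bullet> x) / (b \<bullet> b))"
      apply (rule sum.cong [OF refl], simp)
      by (meson S orthogonal_def pairwise_def that)
   finally show ?thesis
     by (simp add: orthogonal_def algebra_simps inner_sum_left)
  qed
  then show ?thesis
    using orthogonal_to_span orthogonal_commute x by blast
qed

lemma orth_ext_aux:
  fixes S :: "'a::real_inner set"
  assumes "finite T" "finite S" "pairwise orthogonal S"
    shows "\<exists>U. finite U \<and> pairwise orthogonal (S \<union> U) \<and> span (S \<union> U) = span (S \<union> T)"
using assms
proof (induction arbitrary: S)
  case empty then show ?case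
    by (rule_tac x="{}" in exI) simp
next
  case (insert a T)
  have 0: "\<And>x y. \<lbrakk>x \<noteq> y; x \<in> S; y \<in> S\<rbrakk> \<Longrightarrow> x \<bullet> y = 0"
    using insert by (simp add: pairwise_def orthogonal_def)
  define a' where "a' = a - (\<Sum>b\<in>S. (b \<bullet> a / (b \<bullet> b)) *\<^sub>R b)"
  have po: "pairwise orthogonal (insert a' S)"
  proof (rule pairwise_orthogonal_insert[OF insert.prems(2)])
    fix y assume yS: "y \<in> S"
    have "orthogonal y a'" unfolding a'_def by (rule GS_step[OF insert.prems(1,2) span_base[OF yS]])
    thus "orthogonal a' y" by (simp add: orthogonal_commute)
  qed
  obtain U where finU: "finite U" and orthU: "pairwise orthogonal (insert a' S \<union> U)"
             and spanU: "span (insert a' S \<union> U) = span (insert a' S \<union> T)"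
    using insert.IH [of "insert a' S"] po insert.prems by auto
  have "span (S \<union> insert a' U) = span (insert a' (S \<union> T))"
    using spanU by simp
  also have "\<dots> = span (insert a (S \<union> T))"
    by (simp add: a'_def span_neg span_sum span_base span_mul eq_span_insert_eq)
  also have "\<dots> = span (S \<union> insert a T)"
    by simp
  finally show ?case
    using orthU finU by (rule_tac x="insert a' U" in exI) auto
qed

lemma orth_basis:
  fixes F :: "'a::real_inner set"
  assumes "finite F"
  obtains U where "finite U" "0 \<notin> U" "pairwise orthogonal U" "span U = span F"
proof -
  obtain U0 where "finite U0" "pairwise orthogonal U0" "span U0 = span F"
    using orth_ext_aux[of F "{}"] assms by auto
  hence "finite (U0 - {0})" "0 \<notin> U0 - {0}" "pairwise orthogonal (U0 - {0})" "span (U0 - {0}) = span F"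
    by (auto simp: pairwise_def)
  thus ?thesis using that by blast
qed

definition proj :: "'a::real_inner set \<Rightarrow> 'a \<Rightarrow> 'a" where
  "proj U x = (\<Sum>b\<in>U. (b \<bullet> x / (b \<bullet> b)) *\<^sub>R b)"

lemma proj_linear: "linear (proj U)"
  unfolding proj_def
  by (rule linearI) (simp_all add: inner_add_right add_divide_distrib scaleR_add_left sum.distrib
      scaleR_sum_right)

lemma proj_in: "proj U x \<in> span U"
  unfolding proj_def by (intro span_sum span_scale span_base)

lemma proj_orth:
  assumes "finite U" "pairwise orthogonal U" "s \<in> span U"
  shows "inner s (x - proj U x) = 0"
  using GS_step[OF assms, of x] by (simp add: proj_def orthogonal_def)

lemma proj_id:
  assumes "finite U" "pairwise orthogonal U" "y \<in> span U"
  shows "proj U y = y"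
proof -
  have "y - proj U y \<in> span U" using assms(3) proj_in by (rule span_diff)
  hence "inner (y - proj U y) (y - proj U y) = 0" using proj_orth[OF assms(1,2)] by blast
  thus ?thesis by simp
qed

lemma coef_bound:
  fixes b y :: "'a::real_inner"
  assumes "b \<noteq> 0"
  shows "\<bar>b \<bullet> y / (b \<bullet> b)\<bar> \<le> norm y / norm b"
proof -
  have nb: "norm b > 0" using assms by simp
  have bb: "b \<bullet> b = norm b * norm b" by (simp add: power2_norm_eq_inner[symmetric] power2_eq_square)
  have "\<bar>b \<bullet> y / (b \<bullet> b)\<bar> = \<bar>b \<bullet> y\<bar> / (norm b * norm b)" using bb nb by (simp add: abs_divide)
  also have "\<dots> \<le> (norm b * norm y) / (norm b * norm b)"
    by (rule divide_right_mono) (simp_all add: Cauchy_Schwarz_ineq2)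
  also have "\<dots> = norm y / norm b" using nb by simp
  finally show ?thesis .
qed

lemma fd_inj_bij:
  fixes M :: "'a::real_inner \<Rightarrow> 'a" and U :: "'a set"
  assumes U: "finite U" "0 \<notin> U" "pairwise orthogonal U"
    and MS: "\<And>x. x \<in> span U \<Longrightarrow> M x \<in> span U"
    and Madd: "\<And>x y. x \<in> span U \<Longrightarrow> y \<in> span U \<Longrightarrow> M (x + y) = M x + M y"
    and Mscale: "\<And>x r. x \<in> span U \<Longrightarrow> M (r *\<^sub>R x) = r *\<^sub>R M x"
    and Minj: "\<And>x. x \<in> span U \<Longrightarrow> M x = 0 \<Longrightarrow> x = 0"
  shows "bij_betw M (span U) (span U) \<and> (\<exists>K. \<forall>x\<in>span U. norm x \<le> K * norm (M x))"
proof -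
  define S where "S = span U"
  have Mdiff: "M (x - y) = M x - M y" if "x \<in> S" "y \<in> S" for x y
  proof -
    have "x - y \<in> S" using that by (simp add: S_def span_diff)
    hence "M (x - y) + M y = M x" using Madd[of "x - y" y] that by (simp add: S_def)
    thus ?thesis by (simp add: algebra_simps)
  qed
  have injM: "inj_on M S"
  proof (rule inj_onI)
    fix x y assume "x \<in> S" "y \<in> S" "M x = M y"
    hence "M (x - y) = 0" using Mdiff by simp
    moreover have "x - y \<in> S" using \<open>x \<in> S\<close> \<open>y \<in> S\<close> by (simp add: S_def span_diff)
    ultimately have "x - y = 0" using Minj[of "x - y"] by (simp add: S_def)
    thus "x = y" by simp
  qed
  define f where "f = M \<circ> proj U"
  have pid: "proj U y = y" if "y \<in> S" for y using proj_id[OF U(1,3)] that by (simp add: S_def)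
  have lf: "linear f"
  proof (rule linearI)
    fix x y
    have "proj U (x + y) = proj U x + proj U y" by (rule linear_add[OF proj_linear])
    thus "f (x + y) = f x + f y"
      using Madd[OF proj_in[of U x] proj_in[of U y]] by (simp add: f_def)
  next
    fix r x
    have "proj U (r *\<^sub>R x) = r *\<^sub>R proj U x" by (rule linear_scale[OF proj_linear])
    thus "f (r *\<^sub>R x) = r *\<^sub>R f x"
      using Mscale[OF proj_in[of U x]] by (simp add: f_def)
  qed
  have fM: "f y = M y" if "y \<in> S" for y using pid[OF that] by (simp add: f_def)
  have injf: "inj_on f (span U)"
    using injM fM by (simp add: S_def inj_on_def)
  have indU: "independent U" using pairwise_orthogonal_independent U by blast
  have indfU: "independent (f ` U)"
    using linear_independent_injective_image[OF lf indU injf] .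
  have cardfU: "card (f ` U) = card U"
    using card_image inj_on_subset[OF injf span_superset] by blast
  have fUS: "f ` U \<subseteq> S" using fM MS span_base by (force simp: S_def)
  have surj: "S \<subseteq> M ` S"
  proof
    fix y assume yS: "y \<in> S"
    have "y \<in> span (f ` U)"
    proof (rule ccontr)
      assume ny: "y \<notin> span (f ` U)"
      hence "independent (insert y (f ` U))" using indfU by (simp add: independent_insertI)
      moreover have "insert y (f ` U) \<subseteq> span U" using yS fUS by (simp add: S_def)
      ultimately have "card (insert y (f ` U)) \<le> card U"
        using independent_span_bound[OF U(1)] by blast
      moreover have "y \<notin> f ` U" using ny span_base by blast
      hence "card (insert y (f ` U)) = card U + 1" using cardfU U(1) by simp
      ultimately show False by simp
    qed
    hence "y \<in> f ` span U" using linear_span_image[OF lf] by simp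
    thus "y \<in> M ` S" using fM by (auto simp: S_def)
  qed
  have bij: "bij_betw M S S" using injM surj MS by (auto simp: bij_betw_def S_def)
  have "\<forall>b\<in>U. \<exists>n\<in>S. M n = b" using surj span_base by (force simp: S_def)
  then obtain n where nS: "\<And>b. b \<in> U \<Longrightarrow> n b \<in> S" and nM: "\<And>b. b \<in> U \<Longrightarrow> M (n b) = b" by metis
  define g where "g y = (\<Sum>b\<in>U. (b \<bullet> y / (b \<bullet> b)) *\<^sub>R n b)" for y
  define K where "K = (\<Sum>b\<in>U. norm (n b) / norm b)"
  have bound: "norm x \<le> K * norm (M x)" if xS: "x \<in> S" for x
  proof -
    define y where "y = M x"
    have gS: "g y \<in> S" unfolding g_def S_def using nS
      by (intro span_sum span_scale) (simp add: S_def)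
    have "f (g y) = (\<Sum>b\<in>U. (b \<bullet> y / (b \<bullet> b)) *\<^sub>R f (n b))"
      by (simp add: g_def linear_sum[OF lf] linear_scale[OF lf])
    also have "\<dots> = proj U y" unfolding proj_def using nM fM nS by (intro sum.cong) auto
    also have "\<dots> = y" using pid MS xS by (simp add: y_def S_def)
    finally have "M (g y) = M x" using fM[OF gS] by (simp add: y_def)
    hence gx: "g y = x" using injM gS xS by (simp add: inj_on_def)
    have "norm (g y) \<le> (\<Sum>b\<in>U. norm ((b \<bullet> y / (b \<bullet> b)) *\<^sub>R n b))"
      unfolding g_def by (rule norm_sum)
    also have "\<dots> \<le> (\<Sum>b\<in>U. (norm y / norm b) * norm (n b))"
    proof (rule sum_mono)
      fix b assume "b \<in> U"
      hence "b \<noteq> 0" using U(2) by blast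
      hence "\<bar>b \<bullet> y / (b \<bullet> b)\<bar> * norm (n b) \<le> norm y / norm b * norm (n b)"
        by (intro mult_right_mono coef_bound) simp_all
      thus "norm ((b \<bullet> y / (b \<bullet> b)) *\<^sub>R n b) \<le> norm y / norm b * norm (n b)"
        by (simp only: norm_scaleR)
    qed
    also have "\<dots> = K * norm y" by (simp add: K_def sum_distrib_left sum_distrib_right algebra_simps)
    finally show ?thesis using gx by (simp add: y_def)
  qed
  show ?thesis using bij bound by (auto simp: S_def)
qed


context
  fixes J :: "'h::{real_inner,complete_space} \<Rightarrow> 'h"
  assumes cs: "complex_structure J"
begin

lemma orth_proj_eq:
  assumes S: "subspace S" and gS: "g \<in> S" and H: "\<forall>h\<in>S. cinner J h (x - g) = 0"
  shows "orth_proj J S x = g"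
  unfolding orth_proj_def
proof (rule the_equality)
  show "g \<in> S \<and> (\<forall>h\<in>S. cinner J h (x - g) = 0)" using gS H by blast
  fix g' assume "g' \<in> S \<and> (\<forall>h\<in>S. cinner J h (x - g') = 0)"
  hence g'S: "g' \<in> S" and H': "\<forall>h\<in>S. cinner J h (x - g') = 0" by auto
  define w where "w = g' - g"
  have wS: "w \<in> S" using S g'S gS by (simp add: w_def subspace_diff)
  have "inner w (x - g') = 0" using H' wS cinner_zero_iff[OF cs] by blast
  moreover have "inner w (x - g) = 0" using H wS cinner_zero_iff[OF cs] by blast
  ultimately have "inner w ((x - g) - (x - g')) = 0" by (simp add: inner_diff_right)
  moreover have "(x - g) - (x - g') = w" by (simp add: w_def)
  ultimately have "w = 0" by simp
  thus "g' = g" by (simp add: w_def)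
qed

lemma orth_proj_char:
  assumes S: "csubspace J S" and U: "finite U" "pairwise orthogonal U" "span U = S"
  shows "orth_proj J S x = proj U x \<and> proj U x \<in> S \<and> (\<forall>h\<in>S. cinner J h (x - proj U x) = 0)"
proof -
  have pS: "proj U x \<in> S" using proj_in U(3) by blast
  have H: "\<forall>h\<in>S. cinner J h (x - proj U x) = 0"
  proof
    fix h assume hS: "h \<in> S"
    have "inner h (x - proj U x) = 0" using proj_orth[OF U(1,2)] hS U(3) by blast
    moreover have "inner (J h) (x - proj U x) = 0"
      using proj_orth[OF U(1,2)] csubspace_J[OF cs S hS] U(3) by blast
    hence "inner h (J (x - proj U x)) = 0" using J_skew[OF cs, of h "x - proj U x"] by simp
    ultimately show "cinner J h (x - proj U x) = 0" using cinner_zero_iff[OF cs] by blast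
  qed
  have "orth_proj J S x = proj U x"
    using orth_proj_eq[OF csubspace_subspace[OF cs S] pS H] .
  thus ?thesis using pS H by blast
qed

lemma spec_fd:
  assumes U: "finite U" "0 \<notin> U" "pairwise orthogonal U"
    and MS: "\<And>x. x \<in> span U \<Longrightarrow> Bop x \<in> span U"
    and Madd: "\<And>x y. x \<in> span U \<Longrightarrow> y \<in> span U \<Longrightarrow> Bop (x + y) = Bop x + Bop y"
    and Mscale: "\<And>x r. x \<in> span U \<Longrightarrow> Bop (r *\<^sub>R x) = r *\<^sub>R Bop x"
  shows "complex_of_real l \<in> spec_on J (span U) (span U) Bop \<longleftrightarrow> (\<exists>x\<in>span U. x \<noteq> 0 \<and> Bop x = l *\<^sub>R x)"
proof -
  have e: "\<And>x. cscale J (complex_of_real l) x = l *\<^sub>R x" using cscale_real[OF cs] .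
  have mem: "complex_of_real l \<in> spec_on J (span U) (span U) Bop \<longleftrightarrow>
     \<not> (bij_betw (\<lambda>x. Bop x - cscale J (complex_of_real l) x) (span U) (span U) \<and>
       (\<exists>K. \<forall>x\<in>span U. norm x \<le> K * norm (Bop x - cscale J (complex_of_real l) x)))"
    unfolding spec_on_def by (rule mem_Collect_eq)
  have mem2: "complex_of_real l \<in> spec_on J (span U) (span U) Bop \<longleftrightarrow>
     \<not> (bij_betw (\<lambda>x. Bop x - l *\<^sub>R x) (span U) (span U) \<and>
       (\<exists>K. \<forall>x\<in>span U. norm x \<le> K * norm (Bop x - l *\<^sub>R x)))"
    using mem by (simp only: e)
show ?thesis
proof
  assume sp: "complex_of_real l \<in> spec_on J (span U) (span U) Bop"
  have nsp: "\<not> (bij_betw (\<lambda>x. Bop x - l *\<^sub>R x) (span U) (span U) \<and>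
       (\<exists>K. \<forall>x\<in>span U. norm x \<le> K * norm (Bop x - l *\<^sub>R x)))"
    using sp mem2 by (rule iffD1[rotated])
  show "\<exists>x\<in>span U. x \<noteq> 0 \<and> Bop x = l *\<^sub>R x"
  proof (rule ccontr)
    assume ne: "\<not> ?thesis"
    define M where "M = (\<lambda>x. Bop x - l *\<^sub>R x)"
    have r: "bij_betw M (span U) (span U) \<and> (\<exists>K. \<forall>x\<in>span U. norm x \<le> K * norm (M x))"
    proof (rule fd_inj_bij[OF U])
      show "M x \<in> span U" if "x \<in> span U" for x using MS[OF that] that by (simp add: M_def span_diff span_scale)
      show "M (x + y) = M x + M y" if "x \<in> span U" "y \<in> span U" for x y
        using Madd[OF that] by (simp add: M_def algebra_simps)
      show "M (r *\<^sub>R x) = r *\<^sub>R M x" if "x \<in> span U" for x r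
        using Mscale[OF that] by (simp add: M_def algebra_simps)
      show "x = 0" if "x \<in> span U" "M x = 0" for x using ne that by (auto simp: M_def)
    qed
    have r': "bij_betw (\<lambda>x. Bop x - l *\<^sub>R x) (span U) (span U) \<and>
       (\<exists>K. \<forall>x\<in>span U. norm x \<le> K * norm (Bop x - l *\<^sub>R x))"
      using r unfolding M_def .
    thus False using nsp by contradiction
  qed
next
  assume "\<exists>x\<in>span U. x \<noteq> 0 \<and> Bop x = l *\<^sub>R x"
  then obtain x where xS: "x \<in> span U" and x0: "x \<noteq> 0" and ev: "Bop x = l *\<^sub>R x" by blast
  have B0: "Bop 0 = 0" using Mscale[of 0 0] by (simp add: span_zero)
  have ni: "\<not> inj_on (\<lambda>x. Bop x - l *\<^sub>R x) (span U)"
  proof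
    assume inj: "inj_on (\<lambda>x. Bop x - l *\<^sub>R x) (span U)"
    have "(\<lambda>x. Bop x - l *\<^sub>R x) x = (\<lambda>x. Bop x - l *\<^sub>R x) 0" using ev B0 by simp
    hence "x = 0" by (rule inj_onD[OF inj _ xS span_zero])
    thus False using x0 by contradiction
  qed
  have "\<not> (bij_betw (\<lambda>x. Bop x - l *\<^sub>R x) (span U) (span U) \<and>
       (\<exists>K. \<forall>x\<in>span U. norm x \<le> K * norm (Bop x - l *\<^sub>R x)))"
    using ni unfolding bij_betw_def by blast
  thus "complex_of_real l \<in> spec_on J (span U) (span U) Bop" using mem2 by (rule iffD2[rotated])
qed
qed

end

context
  fixes J :: "'h::{real_inner,complete_space} \<Rightarrow> 'h"
    and D :: "'h set" and A :: "'h \<Rightarrow> 'h" and a :: real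
    and DT :: "'h set" and T :: "'h \<Rightarrow> 'h" and L :: "'h set"
  assumes cs: "complex_structure J"
    and sa: "selfadjoint J D A"
    and bb: "bounded_below_op J D A"
    and a_lt: "a < Inf (Re ` spec_on J D UNIV A)"
    and sqrt: "is_pos_sqrt J D (\<lambda>x. A x - a *\<^sub>R x) DT T"
    and L_sub: "csubspace J L" and L_fin: "\<exists>B. finite B \<and> span B = L" and L_dom: "L \<subseteq> DT"
begin

lemma Tsa: "selfadjoint J DT T" using sqrt by (simp add: is_pos_sqrt_def)
lemma TT: "x \<in> D \<Longrightarrow> T (T x) = A x - a *\<^sub>R x" using sqrt by (simp add: is_pos_sqrt_def)
lemma Ddef: "{x\<in>DT. T x \<in> DT} = D" using sqrt by (simp add: is_pos_sqrt_def)

lemma bijBa: "bij_betw (\<lambda>x. A x - a *\<^sub>R x) D UNIV"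
proof -
  have "complex_of_real a \<notin> spec_on J D UNIV A" by (rule a_resolvent[OF cs sa bb a_lt])
  hence "bij_betw (\<lambda>x. A x - cscale J (complex_of_real a) x) D UNIV" unfolding spec_on_def by blast
  moreover have "(\<lambda>x. A x - cscale J (complex_of_real a) x) = (\<lambda>x. A x - a *\<^sub>R x)"
    by (rule ext) (simp only: cscale_real[OF cs])
  ultimately show ?thesis by simp
qed

lemma Ba_inj: "x \<in> D \<Longrightarrow> y \<in> D \<Longrightarrow> A x - a *\<^sub>R x = A y - a *\<^sub>R y \<Longrightarrow> x = y"
proof -
  assume "x \<in> D" "y \<in> D" "A x - a *\<^sub>R x = A y - a *\<^sub>R y"
  moreover have "inj_on (\<lambda>x. A x - a *\<^sub>R x) D" using bijBa by (simp only: bij_betw_def)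
  ultimately show "x = y" unfolding inj_on_def by blast
qed

lemma Rprop: "shifted_inverse D A a y \<in> D \<and> A (shifted_inverse D A a y) - a *\<^sub>R shifted_inverse D A a y = y"
proof -
  have "\<exists>!x. x \<in> D \<and> A x - a *\<^sub>R x = y"
  proof -
    have "(\<lambda>x. A x - a *\<^sub>R x) ` D = UNIV" using bijBa by (simp only: bij_betw_def)
    hence "y \<in> (\<lambda>x. A x - a *\<^sub>R x) ` D" by simp
    then obtain x where x: "x \<in> D" "A x - a *\<^sub>R x = y" by blast
    moreover have "x' = x" if "x' \<in> D \<and> A x' - a *\<^sub>R x' = y" for x'
      using Ba_inj[of x' x] that x by simp
    ultimately show ?thesis by blast
  qed
  thus ?thesis unfolding shifted_inverse_def by (rule theI')
qed

lemma DT_sub: "subspace DT" using D_sub[OF cs Tsa] .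
lemma D_sub': "subspace D" using D_sub[OF cs sa] .
lemma T0: "T 0 = 0" using A_scaleR[OF cs Tsa, of 0 0] DT_sub by (simp add: subspace_0)
lemma A0: "A 0 = 0" using A_scaleR[OF cs sa, of 0 0] D_sub' by (simp add: subspace_0)

lemma T_inj0: "x \<in> DT \<Longrightarrow> T x = 0 \<Longrightarrow> x = 0"
proof -
  assume xD: "x \<in> DT" and Tx: "T x = 0"
  have "T x \<in> DT" using Tx DT_sub by (simp add: subspace_0)
  hence xD': "x \<in> D" using Ddef xD by blast
  have "A x - a *\<^sub>R x = T (T x)" using TT[OF xD'] by simp
  also have "\<dots> = 0" using Tx T0 by simp
  also have "\<dots> = A 0 - a *\<^sub>R 0" using A0 by simp
  finally show "x = 0" using Ba_inj[OF xD'] D_sub' by (simp add: subspace_0)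
qed

lemma Rkey:
  assumes xD: "x \<in> DT" and yD: "y \<in> DT"
  shows "cinner J (T y) (shifted_inverse D A a (T x)) = cinner J y x"
proof -
  define z where "z = shifted_inverse D A a (T x)"
  have zD: "z \<in> D" and Az: "A z - a *\<^sub>R z = T x" using Rprop[of "T x"] by (auto simp: z_def)
  have zDT: "z \<in> DT" and TzDT: "T z \<in> DT" using zD Ddef by auto
  have "T (T z) = T x" using TT[OF zD] Az by simp
  hence "T (T z - x) = 0" using A_diff[OF cs Tsa TzDT xD] by simp
  moreover have "T z - x \<in> DT" using TzDT xD DT_sub by (simp add: subspace_diff)
  ultimately have "T z = x" using T_inj0 by fastforce
  have "cinner J (T y) z = cinner J y (T z)" using A_sym[OF cs Tsa yD zDT] .
  thus ?thesis using \<open>T z = x\<close> by (simp add: z_def)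
qed

lemma R_add: "shifted_inverse D A a (u + v) = shifted_inverse D A a u + shifted_inverse D A a v"
proof -
  let ?R = "shifted_inverse D A a"
  have u: "?R u \<in> D" "A (?R u) - a *\<^sub>R ?R u = u" using Rprop by auto
  have v: "?R v \<in> D" "A (?R v) - a *\<^sub>R ?R v = v" using Rprop by auto
  have w: "?R (u+v) \<in> D" "A (?R (u+v)) - a *\<^sub>R ?R (u+v) = u + v" using Rprop by auto
  have s: "?R u + ?R v \<in> D" using u v D_sub' by (simp add: subspace_add)
  have "A (?R u + ?R v) - a *\<^sub>R (?R u + ?R v) = u + v"
    using A_add[OF cs sa u(1) v(1)] u(2) v(2) by (simp add: algebra_simps)
  thus ?thesis using Ba_inj[OF w(1) s] w(2) by simp
qed

lemma R_scale: "shifted_inverse D A a (r *\<^sub>R u) = r *\<^sub>R shifted_inverse D A a u"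
proof -
  let ?R = "shifted_inverse D A a"
  have u: "?R u \<in> D" "A (?R u) - a *\<^sub>R ?R u = u" using Rprop by auto
  have w: "?R (r *\<^sub>R u) \<in> D" "A (?R (r *\<^sub>R u)) - a *\<^sub>R ?R (r *\<^sub>R u) = r *\<^sub>R u" using Rprop by auto
  have s: "r *\<^sub>R ?R u \<in> D" using u D_sub' by (simp add: subspace_scale)
  have "A (r *\<^sub>R ?R u) - a *\<^sub>R (r *\<^sub>R ?R u) = r *\<^sub>R u"
    using A_scaleR[OF cs sa u(1)] u(2) by (simp add: algebra_simps)
  thus ?thesis using Ba_inj[OF w(1) s] w(2) by simp
qed

lemma L_subsp: "subspace L" using csubspace_subspace[OF cs L_sub] .

lemma T_add: "x \<in> L \<Longrightarrow> y \<in> L \<Longrightarrow> T (x + y) = T x + T y"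
proof -
  assume "x \<in> L" "y \<in> L"
  hence "x \<in> DT" "y \<in> DT" using L_dom by auto
  thus ?thesis by (rule A_add[OF cs Tsa])
qed
lemma T_scale: "x \<in> L \<Longrightarrow> T (r *\<^sub>R x) = r *\<^sub>R T x"
proof -
  assume "x \<in> L"
  hence "x \<in> DT" using L_dom by auto
  thus ?thesis by (rule A_scaleR[OF cs Tsa])
qed
lemma T_J: "x \<in> L \<Longrightarrow> T (J x) = J (T x)"
proof -
  assume "x \<in> L"
  hence "x \<in> DT" using L_dom by auto
  thus ?thesis by (rule A_J[OF cs Tsa])
qed

lemma G_csub: "csubspace J (T ` L)"
  unfolding csubspace_def subspace_def
proof (intro conjI ballI allI)
  have "0 \<in> L" using L_subsp by (rule subspace_0)
  hence "T 0 \<in> T ` L" by (rule imageI)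
  thus "0 \<in> T ` L" using T0 by simp
  fix x y assume "x \<in> T ` L" "y \<in> T ` L"
  then obtain u v where uv: "u \<in> L" "v \<in> L" "x = T u" "y = T v" by blast
  have "u + v \<in> L" using L_subsp uv by (simp add: subspace_add)
  hence "T (u + v) \<in> T ` L" by (rule imageI)
  thus "x + y \<in> T ` L" using T_add[OF uv(1,2)] uv by simp
next
  fix r x assume "x \<in> T ` L"
  then obtain u where u: "u \<in> L" "x = T u" by blast
  have "r *\<^sub>R u \<in> L" using L_subsp u by (simp add: subspace_scale)
  hence "T (r *\<^sub>R u) \<in> T ` L" by (rule imageI)
  thus "r *\<^sub>R x \<in> T ` L" using T_scale[OF u(1)] u by simp
next
  fix x assume "x \<in> T ` L"
  then obtain u where u: "u \<in> L" "x = T u" by blast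
  have "J u \<in> L" using csubspace_J[OF cs L_sub u(1)] .
  hence "T (J u) \<in> T ` L" by (rule imageI)
  thus "J x \<in> T ` L" using T_J[OF u(1)] u by simp
qed

lemma G_fin: "\<exists>F. finite F \<and> span F = T ` L"
proof -
  obtain B where B: "finite B" "span B = L" using L_fin by blast
  have "span B \<subseteq> {x. x \<in> L \<and> T x \<in> span (T ` B)}"
  proof (rule span_minimal)
    show "B \<subseteq> {x. x \<in> L \<and> T x \<in> span (T ` B)}" using B span_superset by (fastforce intro: span_base)
    show "subspace {x. x \<in> L \<and> T x \<in> span (T ` B)}"
      unfolding subspace_def
    proof (intro conjI ballI allI)
      show "0 \<in> {x. x \<in> L \<and> T x \<in> span (T ` B)}" using T0 L_subsp by (simp add: subspace_0 span_zero)
      fix x y assume "x \<in> {x. x \<in> L \<and> T x \<in> span (T ` B)}" "y \<in> {x. x \<in> L \<and> T x \<in> span (T ` B)}"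
      thus "x + y \<in> {x. x \<in> L \<and> T x \<in> span (T ` B)}" using T_add L_subsp by (simp add: subspace_add span_add)
    next
      fix r x assume "x \<in> {x. x \<in> L \<and> T x \<in> span (T ` B)}"
      thus "r *\<^sub>R x \<in> {x. x \<in> L \<and> T x \<in> span (T ` B)}" using T_scale L_subsp by (simp add: subspace_scale span_scale)
    qed
  qed
  hence "T ` L \<subseteq> span (T ` B)" using B by blast
  moreover have "span (T ` B) \<subseteq> T ` L"
    using span_minimal[of "T ` B" "T ` L"] csubspace_subspace[OF cs G_csub] B span_superset by blast
  ultimately have "span (T ` B) = T ` L" by (rule subset_antisym[rotated])
  moreover have "finite (T ` B)" using B(1) by simp
  ultimately show ?thesis by blast
qed

lemma comp_eq:
  assumes zL: "z \<in> L" and H: "\<forall>y\<in>L. cinner J y z = cinner J (T y) (T x) + complex_of_real a * cinner J y x"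
  shows "form_compression J T a L x = z"
  unfolding form_compression_def
proof (rule the_equality)
  show "z \<in> L \<and> (\<forall>y\<in>L. cinner J y z = cinner J (T y) (T x) + complex_of_real a * cinner J y x)"
    using zL H by blast
  fix z' assume "z' \<in> L \<and> (\<forall>y\<in>L. cinner J y z' = cinner J (T y) (T x) + complex_of_real a * cinner J y x)"
  hence z'L: "z' \<in> L" and H': "\<forall>y\<in>L. cinner J y z' = cinner J (T y) (T x) + complex_of_real a * cinner J y x" by auto
  have wL: "z' - z \<in> L" using z'L zL L_subsp by (simp add: subspace_diff)
  have "cinner J (z' - z) (z' - z) = 0"
    using H wL H' by (simp add: cinner_diff_right[OF cs])
  hence "inner (z' - z) (z' - z) = 0" using cinner_zero_iff[OF cs] by blast
  thus "z' = z" by simp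
qed

lemma comp_ex:
  assumes xL: "x \<in> L"
  shows "\<exists>z\<in>L. \<forall>y\<in>L. cinner J y z = cinner J (T y) (T x) + complex_of_real a * cinner J y x"
proof -
  obtain B where B: "finite B" "span B = L" using L_fin by blast
  obtain U where U: "finite U" "0 \<notin> U" "pairwise orthogonal U" "span U = L"
    using orth_basis[OF B(1)] B(2) by metis
  define \<phi> where "\<phi> y = inner (T y) (T x) + a * inner y x" for y
  define z where "z = (\<Sum>b\<in>U. (\<phi> b / (b \<bullet> b)) *\<^sub>R b)"
  have "z \<in> span U" unfolding z_def by (intro span_sum span_scale span_base)
  hence zL: "z \<in> L" using U(4) by simp
  have UL: "U \<subseteq> L" using U(4) span_superset by blast
  have c1: "span U \<subseteq> {y. y \<in> L \<and> inner y z = \<phi> y}"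
  proof (rule span_minimal)
    show "U \<subseteq> {y. y \<in> L \<and> inner y z = \<phi> y}"
    proof
      fix b assume bU: "b \<in> U"
      have "inner b z = (\<Sum>b'\<in>U. (\<phi> b' / (b' \<bullet> b')) * inner b b')"
        by (simp add: z_def inner_sum_right)
      also have "\<dots> = (\<Sum>b'\<in>U. if b' = b then \<phi> b else 0)"
      proof (rule sum.cong[OF refl])
        fix b' assume b'U: "b' \<in> U"
        show "(\<phi> b' / (b' \<bullet> b')) * inner b b' = (if b' = b then \<phi> b else 0)"
        proof (cases "b' = b")
          case True thus ?thesis using bU U(2) by auto
        next
          case False thus ?thesis using U(3) bU b'U by (auto simp: pairwise_def orthogonal_def)
        qed
      qed
      also have "\<dots> = \<phi> b" using bU U(1) by simp
      finally show "b \<in> {y. y \<in> L \<and> inner y z = \<phi> y}" using bU UL by blast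
    qed
    show "subspace {y. y \<in> L \<and> inner y z = \<phi> y}"
      unfolding subspace_def
    proof (intro conjI ballI allI)
      show "0 \<in> {y. y \<in> L \<and> inner y z = \<phi> y}" using T0 L_subsp by (simp add: subspace_0 \<phi>_def)
      fix u v assume "u \<in> {y. y \<in> L \<and> inner y z = \<phi> y}" "v \<in> {y. y \<in> L \<and> inner y z = \<phi> y}"
      thus "u + v \<in> {y. y \<in> L \<and> inner y z = \<phi> y}" using T_add L_subsp
        by (simp add: subspace_add \<phi>_def inner_add_left algebra_simps)
    next
      fix r u assume "u \<in> {y. y \<in> L \<and> inner y z = \<phi> y}"
      thus "r *\<^sub>R u \<in> {y. y \<in> L \<and> inner y z = \<phi> y}" using T_scale L_subsp
        by (simp add: subspace_scale \<phi>_def algebra_simps)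
    qed
  qed
  have re: "inner y z = \<phi> y" if "y \<in> L" for y using c1 U(4) that by blast
  have im: "inner y (J z) = inner (T y) (J (T x)) + a * inner y (J x)" if yL: "y \<in> L" for y
  proof -
    have JyL: "J y \<in> L" using csubspace_J[OF cs L_sub yL] .
    have "inner y (J z) = - inner (J y) z" using J_skew[OF cs, of y z] by simp
    also have "\<dots> = - \<phi> (J y)" using re[OF JyL] by simp
    also have "\<dots> = - (inner (J (T y)) (T x) + a * inner (J y) x)" by (simp add: \<phi>_def T_J[OF yL])
    also have "\<dots> = inner (T y) (J (T x)) + a * inner y (J x)" by (simp add: J_skew[OF cs])
    finally show ?thesis .
  qed
  have "\<forall>y\<in>L. cinner J y z = cinner J (T y) (T x) + complex_of_real a * cinner J y x"
  proof
    fix y assume yL: "y \<in> L"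
    show "cinner J y z = cinner J (T y) (T x) + complex_of_real a * cinner J y x"
      using re[OF yL] im[OF yL] by (simp add: complex_eq_iff cinner_def \<phi>_def)
  qed
  thus ?thesis using zL by blast
qed

lemma comp_char:
  assumes xL: "x \<in> L"
  shows "form_compression J T a L x \<in> L \<and> (\<forall>y\<in>L. cinner J y (form_compression J T a L x) = cinner J (T y) (T x) + complex_of_real a * cinner J y x)"
proof -
  obtain z where "z \<in> L" "\<forall>y\<in>L. cinner J y z = cinner J (T y) (T x) + complex_of_real a * cinner J y x"
    using comp_ex[OF xL] by blast
  moreover hence "form_compression J T a L x = z" using comp_eq by blast
  ultimately show ?thesis by simp
qed

lemma comp_add: "x \<in> L \<Longrightarrow> y \<in> L \<Longrightarrow> form_compression J T a L (x + y) = form_compression J T a L x + form_compression J T a L y"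
proof -
  assume xL: "x \<in> L" and yL: "y \<in> L"
  let ?C = "form_compression J T a L"
  show ?thesis
  proof (rule comp_eq)
    show "?C x + ?C y \<in> L" using comp_char[OF xL] comp_char[OF yL] L_subsp by (simp add: subspace_add)
    show "\<forall>w\<in>L. cinner J w (?C x + ?C y) = cinner J (T w) (T (x + y)) + complex_of_real a * cinner J w (x + y)"
      using comp_char[OF xL] comp_char[OF yL] T_add[OF xL yL]
      by (simp add: cinner_add_right[OF cs] algebra_simps)
  qed
qed

lemma comp_scale: "x \<in> L \<Longrightarrow> form_compression J T a L (r *\<^sub>R x) = r *\<^sub>R form_compression J T a L x"
proof -
  assume xL: "x \<in> L"
  let ?C = "form_compression J T a L"
  show ?thesis
  proof (rule comp_eq)
    show "r *\<^sub>R ?C x \<in> L" using comp_char[OF xL] L_subsp by (simp add: subspace_scale)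
    show "\<forall>w\<in>L. cinner J w (r *\<^sub>R ?C x) = cinner J (T w) (T (r *\<^sub>R x)) + complex_of_real a * cinner J w (r *\<^sub>R x)"
      using comp_char[OF xL] T_scale[OF xL]
      by (simp add: cinner_scaleR_right[OF cs] algebra_simps)
  qed
qed

lemma E1:
  assumes xL: "x \<in> L"
  shows "form_compression J T a L x = l *\<^sub>R x \<longleftrightarrow> (\<forall>y\<in>L. cinner J (T y) (T x) = complex_of_real (l - a) * cinner J y x)"
proof
  assume ev: "form_compression J T a L x = l *\<^sub>R x"
  show "\<forall>y\<in>L. cinner J (T y) (T x) = complex_of_real (l - a) * cinner J y x"
  proof
    fix y assume yL: "y \<in> L"
    have "cinner J y (l *\<^sub>R x) = cinner J (T y) (T x) + complex_of_real a * cinner J y x"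
      using comp_char[OF xL] yL ev by auto
    thus "cinner J (T y) (T x) = complex_of_real (l - a) * cinner J y x"
      by (simp add: cinner_scaleR_right[OF cs] algebra_simps)
  qed
next
  assume H: "\<forall>y\<in>L. cinner J (T y) (T x) = complex_of_real (l - a) * cinner J y x"
  show "form_compression J T a L x = l *\<^sub>R x"
  proof (rule comp_eq)
    show "l *\<^sub>R x \<in> L" using xL L_subsp by (simp add: subspace_scale)
    show "\<forall>y\<in>L. cinner J y (l *\<^sub>R x) = cinner J (T y) (T x) + complex_of_real a * cinner J y x"
      using H by (simp add: cinner_scaleR_right[OF cs] algebra_simps)
  qed
qed

lemma E2:
  assumes xL: "x \<in> L" and U: "finite U" "pairwise orthogonal U" "span U = T ` L"
  shows "orth_proj J (T ` L) (shifted_inverse D A a (T x)) = m *\<^sub>R T x \<longleftrightarrow>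
         (\<forall>y\<in>L. cinner J y x = complex_of_real m * cinner J (T y) (T x))"
proof
  let ?g = "shifted_inverse D A a (T x)"
  assume ev: "orth_proj J (T ` L) ?g = m *\<^sub>R T x"
  have ch: "\<forall>h\<in>T ` L. cinner J h (?g - orth_proj J (T ` L) ?g) = 0"
    using orth_proj_char[OF cs G_csub U, of ?g] by simp
  show "\<forall>y\<in>L. cinner J y x = complex_of_real m * cinner J (T y) (T x)"
  proof
    fix y assume yL: "y \<in> L"
    have "cinner J (T y) (?g - m *\<^sub>R T x) = 0" using ch yL ev by auto
    hence "cinner J (T y) ?g = complex_of_real m * cinner J (T y) (T x)"
      by (simp add: cinner_diff_right[OF cs] cinner_scaleR_right[OF cs])
    moreover have "x \<in> DT" "y \<in> DT" using xL yL L_dom by auto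
    ultimately show "cinner J y x = complex_of_real m * cinner J (T y) (T x)"
      using Rkey[of x y] by simp
  qed
next
  let ?g = "shifted_inverse D A a (T x)"
  assume H: "\<forall>y\<in>L. cinner J y x = complex_of_real m * cinner J (T y) (T x)"
  show "orth_proj J (T ` L) ?g = m *\<^sub>R T x"
  proof (rule orth_proj_eq[OF cs])
    show "subspace (T ` L)" using csubspace_subspace[OF cs G_csub] .
    show "m *\<^sub>R T x \<in> T ` L" using xL csubspace_subspace[OF cs G_csub] by (simp add: subspace_scale)
    show "\<forall>h\<in>T ` L. cinner J h (?g - m *\<^sub>R T x) = 0"
    proof
      fix h assume "h \<in> T ` L"
      then obtain y where yL: "y \<in> L" and h: "h = T y" by blast
      have "x \<in> DT" "y \<in> DT" using xL yL L_dom by auto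
      hence "cinner J (T y) ?g = cinner J y x" by (rule Rkey)
      thus "cinner J h (?g - m *\<^sub>R T x) = 0"
        using H yL h by (simp add: cinner_diff_right[OF cs] cinner_scaleR_right[OF cs])
    qed
  qed
qed

lemma lemma4p5_main: "\<forall>l::real. l \<noteq> a \<longrightarrow>
     (complex_of_real l \<in> spec_on J L L (form_compression J T a L)
      \<longleftrightarrow> complex_of_real (inverse (l - a)) \<in>
          spec_on J (T ` L) (T ` L) (\<lambda>x. orth_proj J (T ` L) (shifted_inverse D A a x)))"
proof (intro allI impI)
  fix l :: real assume la: "l \<noteq> a"
  define m where "m = inverse (l - a)"
  have km: "(l - a) * m = 1" using la by (simp add: m_def)
  obtain B where B: "finite B" "span B = L" using L_fin by blast
  obtain UL where UL: "finite UL" "0 \<notin> UL" "pairwise orthogonal UL" "span UL = L"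
    using orth_basis[OF B(1)] B(2) by metis
  obtain F where F: "finite F" "span F = T ` L" using G_fin by blast
  obtain UG where UG: "finite UG" "0 \<notin> UG" "pairwise orthogonal UG" "span UG = T ` L"
    using orth_basis[OF F(1)] F(2) by metis
  let ?C = "form_compression J T a L"
  let ?Q = "\<lambda>x. orth_proj J (T ` L) (shifted_inverse D A a x)"
  have Qp: "orth_proj J (T ` L) z = proj UG z" for z
    using orth_proj_char[OF cs G_csub UG(1,3,4)] by blast
  have lhs: "complex_of_real l \<in> spec_on J L L ?C \<longleftrightarrow> (\<exists>x\<in>L. x \<noteq> 0 \<and> ?C x = l *\<^sub>R x)"
  proof -
    have "complex_of_real l \<in> spec_on J (span UL) (span UL) ?C \<longleftrightarrow> (\<exists>x\<in>span UL. x \<noteq> 0 \<and> ?C x = l *\<^sub>R x)"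
    proof (rule spec_fd[OF cs UL(1-3)])
      show "?C x \<in> span UL" if "x \<in> span UL" for x using comp_char[of x] that UL(4) by simp
      show "?C (x + y) = ?C x + ?C y" if "x \<in> span UL" "y \<in> span UL" for x y
        using comp_add[of x y] that UL(4) by simp
      show "?C (r *\<^sub>R x) = r *\<^sub>R ?C x" if "x \<in> span UL" for x r
        using comp_scale[of x r] that UL(4) by simp
    qed
    thus ?thesis using UL(4) by simp
  qed
  have rhs: "complex_of_real m \<in> spec_on J (T ` L) (T ` L) ?Q \<longleftrightarrow> (\<exists>g\<in>T ` L. g \<noteq> 0 \<and> ?Q g = m *\<^sub>R g)"
  proof -
    have "complex_of_real m \<in> spec_on J (span UG) (span UG) ?Q \<longleftrightarrow> (\<exists>g\<in>span UG. g \<noteq> 0 \<and> ?Q g = m *\<^sub>R g)"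
    proof (rule spec_fd[OF cs UG(1-3)])
      show "?Q x \<in> span UG" for x unfolding Qp by (rule proj_in)
      show "?Q (x + y) = ?Q x + ?Q y" for x y unfolding Qp R_add by (rule linear_add[OF proj_linear])
      show "?Q (r *\<^sub>R x) = r *\<^sub>R ?Q x" for x r unfolding Qp R_scale by (rule linear_scale[OF proj_linear])
    qed
    thus ?thesis using UG(4) by simp
  qed
  have eq: "(\<exists>x\<in>L. x \<noteq> 0 \<and> ?C x = l *\<^sub>R x) \<longleftrightarrow> (\<exists>g\<in>T ` L. g \<noteq> 0 \<and> ?Q g = m *\<^sub>R g)"
  proof
    assume "\<exists>x\<in>L. x \<noteq> 0 \<and> ?C x = l *\<^sub>R x"
    then obtain x where xL: "x \<in> L" and x0: "x \<noteq> 0" and ev: "?C x = l *\<^sub>R x" by blast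
    have "\<forall>y\<in>L. cinner J y x = complex_of_real m * cinner J (T y) (T x)"
    proof
      fix y assume "y \<in> L"
      hence "cinner J (T y) (T x) = complex_of_real (l - a) * cinner J y x" using E1[OF xL] ev by blast
      hence "complex_of_real m * cinner J (T y) (T x) = complex_of_real m * (complex_of_real (l - a) * cinner J y x)"
        by (simp only:)
      also have "\<dots> = (complex_of_real ((l - a) * m)) * cinner J y x"
        by (simp only: of_real_mult mult_ac)
      finally have "complex_of_real m * cinner J (T y) (T x) = (complex_of_real ((l - a) * m)) * cinner J y x" .
      thus "cinner J y x = complex_of_real m * cinner J (T y) (T x)" using km by simp
    qed
    hence "?Q (T x) = m *\<^sub>R T x" using E2[OF xL UG(1,3,4)] by blast
    moreover have "T x \<noteq> 0" using T_inj0 x0 xL L_dom by blast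
    ultimately show "\<exists>g\<in>T ` L. g \<noteq> 0 \<and> ?Q g = m *\<^sub>R g" using xL by blast
  next
    assume "\<exists>g\<in>T ` L. g \<noteq> 0 \<and> ?Q g = m *\<^sub>R g"
    then obtain x where xL: "x \<in> L" and g0: "T x \<noteq> 0" and ev: "?Q (T x) = m *\<^sub>R T x" by blast
    have H: "\<forall>y\<in>L. cinner J y x = complex_of_real m * cinner J (T y) (T x)"
      using E2[OF xL UG(1,3,4)] ev by blast
    have "\<forall>y\<in>L. cinner J (T y) (T x) = complex_of_real (l - a) * cinner J y x"
    proof
      fix y assume "y \<in> L"
      hence "cinner J y x = complex_of_real m * cinner J (T y) (T x)" using H by blast
      hence "complex_of_real (l - a) * cinner J y x = complex_of_real (l - a) * (complex_of_real m * cinner J (T y) (T x))"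
        by (simp only:)
      also have "\<dots> = (complex_of_real ((l - a) * m)) * cinner J (T y) (T x)"
        by (simp only: of_real_mult mult_ac)
      finally have "complex_of_real (l - a) * cinner J y x = (complex_of_real ((l - a) * m)) * cinner J (T y) (T x)" .
      thus "cinner J (T y) (T x) = complex_of_real (l - a) * cinner J y x" using km by simp
    qed
    hence "?C x = l *\<^sub>R x" using E1[OF xL] by blast
    moreover have "x \<noteq> 0" using g0 T0 by auto
    ultimately show "\<exists>x\<in>L. x \<noteq> 0 \<and> ?C x = l *\<^sub>R x" using xL by blast
  qed
  show "complex_of_real l \<in> spec_on J L L ?C \<longleftrightarrow> complex_of_real (inverse (l - a)) \<in> spec_on J (T ` L) (T ` L) ?Q"
    using lhs rhs eq by (simp add: m_def)
qed

end

theorem lemma4p5: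
  fixes J :: "'h::{real_inner,complete_space} \<Rightarrow> 'h"
    and D :: "'h set" and A :: "'h \<Rightarrow> 'h" and a :: real
    and DT :: "'h set" and T :: "'h \<Rightarrow> 'h" and L :: "'h set"
  assumes cs: "complex_structure J"
    and sep: "separable_space (euclidean :: 'h topology)"
    and infdim: "\<not> (\<exists>B. finite B \<and> span B = (UNIV :: 'h set))"
    and sa: "selfadjoint J D A"
    and bb: "bounded_below_op J D A"
    and a_lt: "a < Inf (Re ` spec_on J D UNIV A)"
    and sqrt: "is_pos_sqrt J D (\<lambda>x. A x - a *\<^sub>R x) DT T"
    and L_sub: "csubspace J L" and L_fin: "\<exists>B. finite B \<and> span B = L" and L_dom: "L \<subseteq> DT"
  shows "\<forall>l::real. l \<noteq> a \<longrightarrow>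
     (complex_of_real l \<in> spec_on J L L (form_compression J T a L)
      \<longleftrightarrow> complex_of_real (inverse (l - a)) \<in>
          spec_on J (T ` L) (T ` L) (\<lambda>x. orth_proj J (T ` L) (shifted_inverse D A a x)))"
  using lemma4p5_main[OF cs sa bb a_lt sqrt L_sub L_fin L_dom] .

end
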